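(* For integers $n\ge1$, $0\le l\le n-1$, and $c\in\mathbb{C}\setminus\{0\}$, $$\sum_{\substack{l_1+\cdots+l_n=l\\ l_i\ge0}}\binom{l}{l_1,\ldots,l_n}\prod_{i=1}^n b_{l_i}(c)=B_l^{(l-n+1)}(cn+1).$$
   Context: The Bernoulli polynomials of the second kind are defined by $\frac{t(1+t)^x}{\log(1+t)}=\sum_{l\ge0}b_l(x)\frac{t^l}{l!}$. The Bernoulli polynomials of order $a$ are defined by $\left(\frac{t}{e^t-1}\right)^a e^{xt}=\sum_{n\ge0}B_n^{(a)}(x)\frac{t^n}{n!}$. $\binom{l}{l_1,\ldots,l_n}$ is the multinomial coefficient. *)

theory Defs
  imports "HOL-Computational_Algebra.Formal_Power_Series" "HOL-Library.FuncSet"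
begin

text \<open>Bernoulli polynomials of the second kind:
  t (1+t)^x / log(1+t) = sum_l b_l(x) t^l / l!.
  Here fps_binomial x = (1+t)^x and fps_ln 1 = log(1+t).\<close>
definition bernoulli2 :: "nat \<Rightarrow> complex \<Rightarrow> complex" where
  "bernoulli2 l x = fact l * fps_nth (fps_X * fps_binomial x / fps_ln 1) l"

definition bernoulli_ord_gf :: "int \<Rightarrow> complex fps" where
  "bernoulli_ord_gf a =
     (if a \<ge> 0 then (fps_X / (fps_exp 1 - 1)) ^ nat a
      else ((fps_exp 1 - 1) / fps_X) ^ nat (- a))"

definition bernoulli_ord :: "int \<Rightarrow> nat \<Rightarrow> complex \<Rightarrow> complex" where
  "bernoulli_ord a n x = fact n * fps_nth (bernoulli_ord_gf a * fps_exp x) n"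

definition multinomial :: "nat \<Rightarrow> (nat \<Rightarrow> nat) \<Rightarrow> nat set \<Rightarrow> nat" where
  "multinomial l ls I = fact l div (\<Prod>i\<in>I. fact (ls i))"

end

theory Submission
  imports Defs "HOL-Computational_Algebra.Formal_Laurent_Series"
begin


lemma prod_fact_dvd:
  assumes "finite I"
  shows "(\<Prod>i\<in>I. fact (ls i)) dvd (fact (\<Sum>i\<in>I. ls i) :: nat)"
  using assms
proof (induction I rule: finite_induct)
  case empty then show ?case by simp
next
  case (insert a I)
  have "(\<Prod>i\<in>insert a I. fact (ls i) :: nat) = fact (ls a) * (\<Prod>i\<in>I. fact (ls i))"
    using insert by simp
  also have "\<dots> dvd fact (ls a) * fact (\<Sum>i\<in>I. ls i)"
    using insert.IH by (metis mult_dvd_mono dvd_refl)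
  also have "\<dots> dvd fact (ls a + (\<Sum>i\<in>I. ls i))" by (rule fact_fact_dvd_fact)
  finally show ?case using insert by simp
qed

lemma fps_prod_nth_PiE:
  fixes G :: "'b \<Rightarrow> 'a::comm_ring_1 fps"
  assumes "finite I"
  shows "(\<Prod>i\<in>I. G i) $ l = (\<Sum>ls\<in>{ls \<in> I \<rightarrow>\<^sub>E {..l}. sum ls I = l}. \<Prod>i\<in>I. G i $ ls i)"
  using assms
proof (induction I arbitrary: l rule: finite_induct)
  case empty
  then show ?case by (cases l) auto
next
  case (insert a I l)
  define S where "S = (\<lambda>(I::'b set) l. {ls \<in> I \<rightarrow>\<^sub>E {..l}. sum ls I = (l::nat)})"
  have finS: "finite (S J m)" if "finite J" for J m
    unfolding S_def using that by (intro finite_subset[OF _ finite_PiE[of J "\<lambda>_. {..m}"]]) auto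
  have "(\<Prod>i\<in>insert a I. G i) $ l = (\<Sum>j=0..l. G a $ j * (\<Prod>i\<in>I. G i) $ (l - j))"
    using insert by (simp add: fps_mult_nth)
  also have "\<dots> = (\<Sum>j=0..l. \<Sum>ls\<in>S I (l-j). G a $ j * (\<Prod>i\<in>I. G i $ ls i))"
    by (simp add: insert.IH S_def sum_distrib_left)
  also have "\<dots> = (\<Sum>(j,ls)\<in>Sigma {0..l} (\<lambda>j. S I (l-j)). G a $ j * (\<Prod>i\<in>I. G i $ ls i))"
    by (rule sum.Sigma) (auto intro: finS insert.hyps)
  also have "\<dots> = (\<Sum>ls\<in>S (insert a I) l. \<Prod>i\<in>insert a I. G i $ ls i)"
  proof (rule sum.reindex_bij_witness[where i = "\<lambda>ls. (ls a, restrict ls I)" and j = "\<lambda>(j,ls). ls(a:=j)"])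
    fix p assume p: "p \<in> Sigma {0..l} (\<lambda>j. S I (l-j))"
    obtain j ls where pj: "p = (j, ls)" by force
    with p have j: "j \<le> l" and ls: "ls \<in> I \<rightarrow>\<^sub>E {..l-j}" "sum ls I = l - j" by (auto simp: S_def)
    have extls: "ls x = undefined" if "x \<notin> I" for x using ls(1) that by (auto simp: PiE_def extensional_def)
    have r: "restrict (ls(a:=j)) I = ls"
    proof (rule ext)
      fix x show "restrict (ls(a:=j)) I x = ls x" using insert.hyps(2) extls[of x] by (cases "x\<in>I") auto
    qed
    show "(\<lambda>ls. (ls a, restrict ls I)) ((\<lambda>(j,ls). ls(a:=j)) p) = p"
      unfolding pj prod.case fun_upd_same r by (rule refl)
    have "sum (ls(a:=j)) I = sum ls I"
      using insert.hyps(2) by (intro sum.cong) auto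
    then have "sum (ls(a:=j)) (insert a I) = j + sum ls I"
      using insert.hyps by simp
    then show "(\<lambda>(j,ls). ls(a:=j)) p \<in> S (insert a I) l"
    proof -
      have "\<forall>x\<in>insert a I. (ls(a:=j)) x \<in> {..l}"
      proof
        fix x assume "x \<in> insert a I"
        then show "(ls(a:=j)) x \<in> {..l}"
        proof
          assume "x = a" then show ?thesis using j by simp
        next
          assume x: "x \<in> I"
          then have "ls x \<le> l - j" using ls(1) by (auto simp: PiE_iff)
          then show ?thesis using x insert.hyps(2) by auto
        qed
      qed
      moreover have "ls(a:=j) \<in> extensional (insert a I)" using ls(1) by (auto simp: PiE_iff extensional_def)
      ultimately have "ls(a:=j) \<in> insert a I \<rightarrow>\<^sub>E {..l}" by (simp only: PiE_iff)
      then show ?thesis using j ls(2) \<open>sum (ls(a:=j)) (insert a I) = j + sum ls I\<close> by (simp add: pj S_def)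
    qed
    show "(\<Prod>i\<in>insert a I. G i $ ((\<lambda>(j,ls). ls(a:=j)) p) i) =
          (\<lambda>(j, ls). G a $ j * (\<Prod>i\<in>I. G i $ ls i)) p"
    proof -
      have "(\<Prod>i\<in>I. G i $ (ls(a:=j)) i) = (\<Prod>i\<in>I. G i $ ls i)"
        using insert.hyps(2) by (intro prod.cong) auto
      then show ?thesis using insert.hyps by (simp add: pj)
    qed
  next
    fix ls assume ls: "ls \<in> S (insert a I) l"
    then have ls1: "ls \<in> insert a I \<rightarrow>\<^sub>E {..l}" and ls2: "sum ls (insert a I) = l" by (auto simp: S_def)
    have extls: "ls x = undefined" if "x \<notin> insert a I" for x using ls1 that by (auto simp: PiE_def extensional_def)
    have r: "(restrict ls I)(a := ls a) = ls"
    proof (rule ext)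
      fix x show "((restrict ls I)(a := ls a)) x = ls x" using extls[of x] by (cases "x\<in>I") auto
    qed
    show "(\<lambda>(j,ls). ls(a:=j)) ((\<lambda>ls. (ls a, restrict ls I)) ls) = ls"
      using r by simp
    have s: "ls a + sum ls I = l" using ls2 insert.hyps by simp
    have le: "ls i \<le> sum ls I" if "i \<in> I" for i using that insert.hyps by (intro member_le_sum) auto
    show "(\<lambda>ls. (ls a, restrict ls I)) ls \<in> Sigma {0..l} (\<lambda>j. S I (l-j))"
    proof -
      have "\<forall>i\<in>I. restrict ls I i \<in> {..l - ls a}"
      proof
        fix i assume i: "i \<in> I"
        with le[OF i] s show "restrict ls I i \<in> {..l - ls a}" by simp
      qed
      then have "restrict ls I \<in> I \<rightarrow>\<^sub>E {..l - ls a}" by (simp only: PiE_iff restrict_extensional simp_thms)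
      moreover have "sum (restrict ls I) I = sum ls I" by (intro sum.cong) auto
      moreover have "sum ls I = l - ls a" using s by simp
      ultimately show ?thesis using s by (auto simp add: S_def)
    qed
  qed
  finally show ?case by (simp add: S_def)
qed



lemma res_powi_deriv:
  fixes Hf :: "complex fls"
  assumes sub: "fls_subdegree Hf = 1" and m: "m \<ge> 1"
  shows "fls_residue (Hf powi (- int m) * fls_deriv Hf) = (if m = 1 then 1 else 0)"
proof -
  have Hnz: "Hf \<noteq> 0" using sub by auto
  show ?thesis
  proof (cases "m = 1")
    case True
    then show ?thesis
      using fls_residue_deriv_times_inverse_eq_subdegree(2)[of Hf] sub
      by (simp add: power_int_minus)
  next
    case False
    then obtain i where mi: "m = Suc (Suc i)" using m by (metis One_nat_def Suc_le_D le_SucE not_less_eq_eq)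
    have "fls_deriv (inverse (Hf ^ Suc i)) = - inverse (Hf ^ Suc i) * fls_deriv (Hf ^ Suc i) * inverse (Hf ^ Suc i)"
      by (rule fls_inverse_deriv_divring)
    also have "\<dots> = - of_nat (Suc i) * (inverse (Hf ^ Suc (Suc i)) * fls_deriv Hf)"
    proof -
      have "fls_deriv (Hf ^ Suc i) = of_nat (Suc i) * Hf ^ i * fls_deriv Hf"
        by (simp only: fls_deriv_power diff_Suc_1)
      then show ?thesis using Hnz by (simp add: field_simps del: of_nat_Suc)
    qed
    finally have eq: "fls_deriv (inverse (Hf ^ Suc i)) = - of_nat (Suc i) * (inverse (Hf ^ Suc (Suc i)) * fls_deriv Hf)" .
    have "0 = fls_residue (fls_deriv (inverse (Hf ^ Suc i)))" by (simp only: fls_residue_deriv)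
    also have "\<dots> = - of_nat (Suc i) * fls_residue (inverse (Hf ^ Suc (Suc i)) * fls_deriv Hf)"
      unfolding eq fls_of_nat by (simp add: fls_residue_fls_const_times del: of_nat_Suc)
    finally have "fls_residue (inverse (Hf ^ Suc (Suc i)) * fls_deriv Hf) = 0"
      by (simp del: of_nat_Suc)
    then have zero: "fls_residue (inverse (Hf ^ Suc (Suc i)) * fls_deriv Hf) = 0" .
    have pw: "Hf powi (- int m) = inverse (Hf ^ Suc (Suc i))"
      unfolding mi by (simp only: power_int_minus power_int_of_nat)
    show ?thesis unfolding pw using False zero by (simp only: if_False)
  qed
qed

lemma res_compose:
  fixes H :: "complex fps"
  assumes H0: "H $ 0 = 0" and H1: "H $ 1 \<noteq> 0"
  shows "fls_residue (fls_compose_fps f H * fps_to_fls (fps_deriv H)) = fls_residue f"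
proof -
  have Hnz: "H \<noteq> 0" using H1 by auto
  have subH: "subdegree H = 1" using H0 H1 by (intro subdegreeI) auto
  define Hf where "Hf = fps_to_fls H"
  have subHf: "fls_subdegree Hf = 1" using subH by (simp add: Hf_def fls_subdegree_fls_to_fps)
  have dHf: "fps_to_fls (fps_deriv H) = fls_deriv Hf" by (simp add: Hf_def fls_deriv_fps_to_fls)
  have main: "\<And>f. nat (- fls_subdegree f) = m \<Longrightarrow>
     fls_residue (fls_compose_fps f H * fls_deriv Hf) = fls_residue f" for m
  proof (induction m rule: less_induct)
    case (less m f)
    show ?case
    proof (cases "fls_subdegree f \<ge> 0")
      case True
      then have f: "f = fps_to_fls (fls_regpart f)" by simp
      have "fls_compose_fps f H * fls_deriv Hf = fps_to_fls ((fls_regpart f oo H) * fps_deriv H)"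
        by (subst f) (simp add: Hnz H0 dHf[symmetric] fls_times_fps_to_fls)
      moreover have "fls_residue (fps_to_fls g) = 0" for g :: "complex fps" by simp
      ultimately show ?thesis using True by simp
    next
      case False
      define d where "d = fls_subdegree f"
      define a where "a = fls_nth f d"
      define g where "g = f - fls_const a * fls_X_intpow d"
      have d: "d < 0" using False d_def by simp
      have md: "m = nat (-d)" using less.prems d_def by simp
      have lt: "nat (- fls_subdegree g) < m"
      proof (cases "g = 0")
        case True then show ?thesis using md d by simp
      next
        case False
        have "d < fls_subdegree g"
        proof (rule fls_subdegree_greaterI[OF False])
          fix k assume "k \<le> d"
          then show "fls_nth g k = 0" by (cases "k = d") (auto simp: g_def a_def d_def)
        qed
        then show ?thesis using md d by simp
      qed
      have IH: "fls_residue (fls_compose_fps g H * fls_deriv Hf) = fls_residue g"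
        using less.IH[OF lt] by simp
      have fsplit: "f = fls_const a * fls_X_intpow d + g" by (simp add: g_def)
      have comp1: "fls_compose_fps (fls_const a * fls_X_intpow d) H = fls_const a * Hf powi d"
        by (simp add: Hnz H0 fls_compose_fps_mult fls_compose_fps_powi Hf_def flip: fls_X_power_int)
      have r1: "fls_residue (Hf powi d * fls_deriv Hf) = (if d = -1 then 1 else 0)"
      proof -
        have e: "(nat (-d) = 1) = (d = -1)" using d by auto
        show ?thesis using res_powi_deriv[OF subHf, of "nat (-d)"] d e by simp
      qed
      have "fls_residue (fls_compose_fps f H * fls_deriv Hf)
          = fls_residue (fls_const a * (Hf powi d * fls_deriv Hf)) + fls_residue (fls_compose_fps g H * fls_deriv Hf)"
        by (subst fsplit) (simp add: Hnz H0 fls_compose_fps_add comp1 distrib_right fls_residue_add mult.assoc del: fls_residue_def)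
      also have "\<dots> = a * (if d = -1 then 1 else 0) + fls_residue g"
        using IH r1 by (simp add: fls_residue_fls_const_times del: fls_residue_def)
      also have "\<dots> = fls_residue f"
        by (simp add: g_def)
      finally show ?thesis .
    qed
  qed
  show ?thesis using main[OF refl] dHf by simp
qed



abbreviation EE :: "complex fps" where "EE \<equiv> fps_exp 1 - 1"

lemma EE0: "EE $ 0 = 0" by simp
lemma EE1: "EE $ 1 \<noteq> 0" by simp
lemma EEnz: "EE \<noteq> 0" using EE1 by auto
lemma subEE: "subdegree EE = 1" by (rule subdegreeI) auto

lemma binE: "fps_binomial c oo EE = fps_exp c"
proof -
  define G where "G = fps_binomial c oo EE"
  have u: "(1 + fps_X :: complex fps) dvd fps_const c * fps_binomial c"
    by (rule unit_imp_dvd) simp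
  have u2: "(fps_exp 1 :: complex fps) dvd fps_const c * G"
    by (rule unit_imp_dvd) simp
  have c1: "(1 + fps_X) oo EE = fps_exp 1"
    by (simp add: fps_compose_add_distrib)
  have "fps_deriv G = (fps_deriv (fps_binomial c) oo EE) * fps_deriv EE"
    unfolding G_def by (rule fps_compose_deriv) simp
  also have "fps_deriv (fps_binomial c) oo EE = (fps_const c * fps_binomial c oo EE) / ((1 + fps_X) oo EE)"
    unfolding fps_binomial_deriv by (rule fps_compose_divide_distrib[OF u]) (simp_all add: c1)
  also have "(fps_const c * fps_binomial c oo EE) = fps_const c * G"
    unfolding G_def by (simp add: fps_compose_mult_distrib)
  finally have "fps_deriv G = fps_const c * G / fps_exp 1 * fps_exp 1"
    by (simp add: c1)
  also have "\<dots> = fps_const c * G" using u2 by (rule dvd_div_mult_self)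
  finally have "G = fps_const (G $ 0) * fps_exp c" by (simp only: fps_exp_unique_ODE)
  then show ?thesis by (simp add: G_def)
qed

lemma LE: "fps_ln 1 oo EE = fps_X"
  using fps_ln_fps_exp_inv[of "1::complex"] fps_inv_fps_exp_compose(1)[of "1::complex"] by simp

lemma FE: "((fps_X * fps_binomial c / fps_ln 1) oo EE) * fps_X = EE * fps_exp c"
proof -
  have sL: "subdegree (fps_ln (1::complex)) = 1" by (rule subdegreeI) (auto simp: fps_ln_nth)
  have Lnz: "fps_ln (1::complex) \<noteq> 0" using sL by auto
  have Bnz: "fps_binomial c \<noteq> 0" by (metis fps_binomial_nth gbinomial_0(1) one_neq_zero fps_zero_nth)
  have dv: "fps_ln 1 dvd fps_X * fps_binomial c"
    using sL Lnz Bnz by (subst fps_dvd_iff) (auto simp: subdegree_mult)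
  have "(fps_X * fps_binomial c) oo EE = ((fps_X * fps_binomial c / fps_ln 1) oo EE) * (fps_ln 1 oo EE)"
    by (rule fps_compose_divide[OF dv]) simp
  moreover have "(fps_X * fps_binomial c) oo EE = EE * fps_exp c"
    by (simp add: fps_compose_mult_distrib binE)
  ultimately show ?thesis by (simp add: LE)
qed

lemma alg_powi:
  fixes Ef Cf D X :: "'a::field"
  assumes "Ef \<noteq> 0" "X \<noteq> 0"
  shows "Ef powi (- int (Suc l)) * (Ef * Cf / X)^(Suc l + k) * D
       = X powi (- int (Suc l + k)) * (Ef^k * Cf^(Suc l + k) * D)"
  using assms by (simp only: power_int_minus power_int_of_nat) (simp add: field_simps power_add)

lemma coeff_main:
  fixes n l :: nat and c :: complex
  assumes ln: "l < n"
  shows "(fps_X * fps_binomial c / fps_ln 1)^n $ l = (EE^(n-l-1) * fps_exp (c * of_nat n + 1)) $ (n-1)"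
proof -
  define F where "F = fps_X * fps_binomial c / fps_ln 1"
  define k where "k = n - l - 1"
  have nk: "n = Suc l + k" using ln by (simp add: k_def)
  define Ef where "Ef = fps_to_fls EE"
  have Efnz: "Ef \<noteq> 0" using EEnz by (simp add: Ef_def)
  define Q where "Q = F oo EE"
  have Qf: "fps_to_fls Q = Ef * fps_to_fls (fps_exp c) / fls_X"
  proof -
    have "fps_to_fls Q * fls_X = Ef * fps_to_fls (fps_exp c)"
      using FE[of c] unfolding Q_def F_def Ef_def
      by (metis fls_times_fps_to_fls fps_X_to_fls)
    moreover have "(fls_X :: complex fls) \<noteq> 0" by simp
    ultimately show ?thesis by (metis nonzero_mult_div_cancel_right)
  qed
  define f where "f = fls_X powi (- int (Suc l)) * fps_to_fls (F^n)"
  have "F^n $ l = fls_residue f"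
    using fls_residue_shift_nth[of "fps_to_fls (F^n)" "int l"] by (simp add: f_def add.commute)
  also have "\<dots> = fls_residue (fls_compose_fps f EE * fps_to_fls (fps_deriv EE))"
    by (rule res_compose[symmetric]) simp_all
  also have "fls_compose_fps f EE = Ef powi (- int (Suc l)) * fps_to_fls (Q^n)"
  proof -
    have c1: "fls_compose_fps (fls_X powi (- int (Suc l))) EE = Ef powi (- int (Suc l))"
      using EEnz by (subst fls_compose_fps_powi) (simp_all add: Ef_def)
    have "F^n oo EE = Q^n" unfolding Q_def by (rule fps_compose_power[symmetric]) simp
    then show ?thesis
      by (simp only: f_def fls_compose_fps_mult[OF EEnz EE0] c1 fls_compose_fps_to_fls[OF EEnz EE0])
  qed
  also have "fps_deriv EE = fps_exp 1" by simp
  also have "Ef powi (- int (Suc l)) * fps_to_fls (Q^n) * fps_to_fls (fps_exp 1)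
      = fls_X powi (- int n) * fps_to_fls (EE^k * fps_exp (c * of_nat n + 1))"
  proof -
    have e: "fps_exp (c * of_nat n + 1) = fps_exp c ^ n * fps_exp 1"
      by (simp add: fps_exp_add_mult fps_exp_power_mult mult.commute)
    have h1: "fps_to_fls (EE^k * fps_exp (c * of_nat n + 1)) = Ef^k * fps_to_fls (fps_exp c) ^ n * fps_to_fls (fps_exp 1)"
      unfolding e Ef_def by (simp only: fls_times_fps_to_fls fps_to_fls_power mult.assoc)
    have h2: "fps_to_fls (Q^n) = (Ef * fps_to_fls (fps_exp c) / fls_X)^n"
      by (simp only: fps_to_fls_power Qf)
    show ?thesis unfolding h1 h2 unfolding nk
      by (rule alg_powi[OF Efnz]) simp
  qed
  also have "fls_residue (fls_X powi (- int n) * fps_to_fls (EE^k * fps_exp (c * of_nat n + 1)))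
     = (EE^k * fps_exp (c * of_nat n + 1)) $ (n-1)"
  proof -
    have nn: "nat (int n - 1) = n - Suc 0" using ln by auto
    show ?thesis
      using fls_residue_shift_nth[of "fps_to_fls (EE^k * fps_exp (c * of_nat n + 1))" "int (n-1)"] ln
      by (simp add: of_nat_diff nn)
  qed
  finally show ?thesis by (simp add: F_def k_def)
qed



theorem theorem7:
  fixes n l :: nat and c :: complex
  assumes "n \<ge> 1" and "l \<le> n - 1" and "c \<noteq> 0"
  shows "(\<Sum>ls \<in> {ls \<in> {1..n} \<rightarrow>\<^sub>E {..l}. (\<Sum>i\<in>{1..n}. ls i) = l}.
            of_nat (multinomial l ls {1..n}) * (\<Prod>i\<in>{1..n}. bernoulli2 (ls i) c))
       = bernoulli_ord (int l - int n + 1) l (c * of_nat n + 1)"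
proof -
  have ln: "l < n" using assms by linarith
  define F where "F = fps_X * fps_binomial c / fps_ln 1"
  define k where "k = n - l - 1"
  define x where "x = c * of_nat n + 1"
  define S where "S = {ls \<in> {1..n} \<rightarrow>\<^sub>E {..l}. (\<Sum>i\<in>{1..n}. ls i) = l}"
  have bern: "bernoulli2 j c = fact j * F $ j" for j by (simp add: bernoulli2_def F_def)
  have trm: "of_nat (multinomial l ls {1..n}) * (\<Prod>i\<in>{1..n}. bernoulli2 (ls i) c)
       = fact l * (\<Prod>i\<in>{1..n}. F $ ls i)" if ls: "ls \<in> S" for ls
  proof -
    define P where "P = (\<Prod>i\<in>{1..n}. fact (ls i) :: nat)"
    have sl: "(\<Sum>i\<in>{1..n}. ls i) = l" using ls by (simp add: S_def)
    have dv: "P dvd fact l" unfolding P_def using prod_fact_dvd[of "{1..n}" ls] sl by simp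
    have "(\<Prod>i\<in>{1..n}. bernoulli2 (ls i) c) = of_nat P * (\<Prod>i\<in>{1..n}. F $ ls i)"
      by (simp add: bern prod.distrib P_def of_nat_prod)
    moreover have "(of_nat (multinomial l ls {1..n}) :: complex) * of_nat P = fact l"
      using dv unfolding multinomial_def P_def[symmetric]
      by (metis dvd_div_mult_self of_nat_fact of_nat_mult)
    ultimately show ?thesis by (metis mult.assoc)
  qed
  have "(\<Sum>ls\<in>S. of_nat (multinomial l ls {1..n}) * (\<Prod>i\<in>{1..n}. bernoulli2 (ls i) c))
      = (\<Sum>ls\<in>S. fact l * (\<Prod>i\<in>{1..n}. F $ ls i))"
    by (rule sum.cong[OF refl]) (rule trm)
  also have "\<dots> = fact l * (\<Prod>i\<in>{1..n}. F) $ l"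
    unfolding S_def sum_distrib_left[symmetric]
    using fps_prod_nth_PiE[OF finite_atLeastAtMost, of "\<lambda>_. F" 1 n l] by simp
  also have "(\<Prod>i\<in>{1..n}. F) = F ^ n" by simp
  also have "F ^ n $ l = (EE^k * fps_exp x) $ (n-1)"
    unfolding F_def k_def x_def by (rule coeff_main[OF ln])
  also have "(EE^k * fps_exp x) $ (n-1) = (bernoulli_ord_gf (int l - int n + 1) * fps_exp x) $ l"
  proof -
    have gf: "bernoulli_ord_gf (int l - int n + 1) = (fps_shift 1 EE) ^ k"
      using ln by (auto simp: bernoulli_ord_gf_def k_def nat_diff_distrib)
    have "EE = fps_shift 1 EE * fps_X"
      by (rule fps_shift_times_fps_X[symmetric]) (simp only: subEE le_refl)
    then have "EE^k = fps_X^k * (fps_shift 1 EE)^k" by (metis power_mult_distrib mult.commute)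
    then have "(EE^k * fps_exp x) $ (l + k) = ((fps_shift 1 EE)^k * fps_exp x) $ l"
      by (simp add: fps_X_power_mult_nth mult.assoc)
    moreover have "l + k = n - 1" using ln by (simp add: k_def)
    ultimately show ?thesis using gf by simp
  qed
  finally show ?thesis by (simp add: S_def bernoulli_ord_def x_def)
qed

end
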